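(* Let $n$ be a nonnegative integer. Suppose there exist a nonnegative integer $B$ and integers $x,y,z$ such that $$\frac{2n+10B}{3}-10B^2=2x^2+3y^2+4z^2+(2x+3y+4z)^2<(B+1)^2.$$ Then there exist nonnegative integers $w_0,x_0,y_0,z_0$ with $n=p_5(w_0)+2p_5(x_0)+3p_5(y_0)+4p_5(z_0)$.
   Context: For $k\in\mathbb{Z}$, $p_5(k)=k(3k-1)/2$. *)

theory Defs
  imports Complex_Main
begin

definition p5 :: "int \<Rightarrow> int" where
  "p5 k = k * (3 * k - 1) div 2"

end

theory Submission
  imports Defs
begin

lemma p5_2: "2 * p5 k = k * (3 * k - 1)"
proof -
  have "even (k * (3 * k - 1))" by auto
  then show ?thesis unfolding p5_def by simp
qed

lemma sq_le: fixes t Q B :: int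
  assumes "t^2 \<le> Q" "Q < (B+1)^2" "B \<ge> 0" shows "B + t \<ge> 0"
proof (rule ccontr)
  assume "\<not> B + t \<ge> 0"
  then have "-t \<ge> B + 1" by simp
  then have "(B+1)^2 \<le> (-t)^2" using assms(3) by (intro power_mono) auto
  then show False using assms by simp
qed

theorem lemma3p2:
  fixes n B x y z :: int
  assumes "n \<ge> 0" and "B \<ge> 0"
    and "(2 * of_int n + 10 * of_int B) / 3 - 10 * (of_int B)^2
           = (of_int (2*x^2 + 3*y^2 + 4*z^2 + (2*x + 3*y + 4*z)^2) :: real)"
    and "2*x^2 + 3*y^2 + 4*z^2 + (2*x + 3*y + 4*z)^2 < (B + 1)^2"
  shows "\<exists>w0 x0 y0 z0 :: int. w0 \<ge> 0 \<and> x0 \<ge> 0 \<and> y0 \<ge> 0 \<and> z0 \<ge> 0 \<and>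
           n = p5 w0 + 2 * p5 x0 + 3 * p5 y0 + 4 * p5 z0"
proof -
  define Q where "Q = 2*x^2 + 3*y^2 + 4*z^2 + (2*x + 3*y + 4*z)^2"
  define s where "s = 2*x + 3*y + 4*z"
  have "real_of_int (2*n + 10*B - 30*B^2) = real_of_int (3*Q)"
    using assms(3) unfolding Q_def by (simp add: field_simps)
  then have e: "2*n + 10*B - 30*B^2 = 3*Q" by linarith
  have q: "Q < (B+1)^2" using assms(4) Q_def by simp
  have sq: "x^2 \<ge> 0" "y^2 \<ge> 0" "z^2 \<ge> 0" "s^2 \<ge> 0" by auto
  have h1: "B + x \<ge> 0" by (rule sq_le[OF _ q assms(2)]) (use sq in \<open>simp add: Q_def s_def\<close>)
  have h2: "B + y \<ge> 0" by (rule sq_le[OF _ q assms(2)]) (use sq in \<open>simp add: Q_def s_def\<close>)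
  have h3: "B + z \<ge> 0" by (rule sq_le[OF _ q assms(2)]) (use sq in \<open>simp add: Q_def s_def\<close>)
  have h4: "B + (-s) \<ge> 0" by (rule sq_le[OF _ q assms(2)]) (use sq in \<open>simp only: power2_minus, simp add: Q_def s_def\<close>)
  have "2 * (p5 (B - s) + 2 * p5 (B+x) + 3 * p5 (B+y) + 4 * p5 (B+z))
      = (B - s) * (3*(B-s) - 1) + 2 * ((B+x)*(3*(B+x)-1)) + 3 * ((B+y)*(3*(B+y)-1))
        + 4 * ((B+z)*(3*(B+z)-1))"
  proof -
    have g: "2*(a+2*b+3*c+4*d) = A+2*B'+3*C+4*D" if "2*a=A" "2*b=B'" "2*c=C" "2*d=D"
      for a b c d A B' C D :: int unfolding that[symmetric] by (simp add: algebra_simps)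
    show ?thesis by (rule g) (rule p5_2)+
  qed
  also have "\<dots> = 2 * n" using e unfolding Q_def s_def by (simp add: algebra_simps power2_eq_square)
  finally have "n = p5 (B - s) + 2 * p5 (B+x) + 3 * p5 (B+y) + 4 * p5 (B+z)" by simp
  then show ?thesis using h1 h2 h3 h4 by (intro exI[of _ "B - s"] exI[of _ "B+x"] exI[of _ "B+y"] exI[of _ "B+z"]) simp
qed

end
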